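(* Let $X\subset[-1,1]^n$ and $U\subset[-1,1]^m$ be compact sets with $0\in\mathrm{Int}(X)$ and $0\in\mathrm{Int}(U)$, and let $r:=1/\sup\{s>0: [-s,s]^{n+m}\subset X\times U\}$. Then for every $d\ge 0$ and every $p\in\mathbb{R}[x,u]_d$, $$\|p\|_{\mathbb{R}[x,u]}\le 3^{d+1}r^d\,\|p\|_{C(X\times U)}.$$
   Context: $\mathbb{R}[x,u]_d$ is the space of real polynomials in $(x,u)\in\mathbb{R}^{n+m}$ of total degree at most $d$. For $p=\sum_{|\alpha|\le d}\beta_\alpha (x,u)^\alpha$ with $\alpha\in\mathbb{N}^{n+m}$, $\|p\|_{\mathbb{R}[x,u]}:=\max_\alpha|\beta_\alpha|/\binom{|\alpha|}{\alpha}$, where $\binom{|\alpha|}{\alpha}=\frac{|\alpha|!}{\alpha_1!\cdots\alpha_{n+m}!}$. $\|p\|_{C(S)}=\max_{s\in S}|p(s)|$. *)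

theory Defs
  imports "HOL-Analysis.Analysis"
begin

text \<open>A polynomial of degree at most d is given by its coefficient function on multi-indices
of total degree at most d (coefficients elsewhere are ignored).\<close>

definition mdeg :: "('i::finite \<Rightarrow> nat) \<Rightarrow> nat" where
  "mdeg a = (\<Sum>i\<in>UNIV. a i)"

definition monomials_upto :: "nat \<Rightarrow> (('n::finite \<Rightarrow> nat) \<times> ('m::finite \<Rightarrow> nat)) set" where
  "monomials_upto d = {(a, b). mdeg a + mdeg b \<le> d}"

definition multinom :: "('n::finite \<Rightarrow> nat) \<Rightarrow> ('m::finite \<Rightarrow> nat) \<Rightarrow> real" where
  "multinom a b = fact (mdeg a + mdeg b) / ((\<Prod>i\<in>UNIV. fact (a i)) * (\<Prod>j\<in>UNIV. fact (b j)))"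

definition peval :: "nat \<Rightarrow> (('n::finite \<Rightarrow> nat) \<times> ('m::finite \<Rightarrow> nat) \<Rightarrow> real)
    \<Rightarrow> real^'n \<Rightarrow> real^'m \<Rightarrow> real" where
  "peval d c x u = (\<Sum>(a, b)\<in>monomials_upto d. c (a, b) * (\<Prod>i\<in>UNIV. (x $ i) ^ a i) * (\<Prod>j\<in>UNIV. (u $ j) ^ b j))"

definition coeff_norm :: "nat \<Rightarrow> (('n::finite \<Rightarrow> nat) \<times> ('m::finite \<Rightarrow> nat) \<Rightarrow> real) \<Rightarrow> real" where
  "coeff_norm d c = Max ((\<lambda>(a, b). \<bar>c (a, b)\<bar> / multinom a b) ` monomials_upto d)"

definition sup_norm :: "nat \<Rightarrow> (('n::finite \<Rightarrow> nat) \<times> ('m::finite \<Rightarrow> nat) \<Rightarrow> real)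
    \<Rightarrow> ((real^'n) \<times> (real^'m)) set \<Rightarrow> real" where
  "sup_norm d c S = (SUP z\<in>S. \<bar>peval d c (fst z) (snd z)\<bar>)"

definition cube_radius :: "(real^'n::finite) set \<Rightarrow> (real^'m::finite) set \<Rightarrow> real" where
  "cube_radius X U = Sup {s. s > 0 \<and>
      {(x, u). (\<forall>i. \<bar>x $ i\<bar> \<le> s) \<and> (\<forall>j. \<bar>u $ j\<bar> \<le> s)} \<subseteq> X \<times> U}"

end

theory Submission
  imports Defs "HOL-Complex_Analysis.Complex_Analysis"
begin



lemma root_sum_zero:
  fixes K :: nat and m :: int
  assumes K: "K > 0" and m0: "m \<noteq> 0" and mK: "\<bar>m\<bar> < int K"
  shows "(\<Sum>l<K. exp (2 * of_real pi * \<i> * of_int m / of_nat K) ^ l) = 0"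
proof -
  define \<zeta> where "\<zeta> = exp (2 * of_real pi * \<i> * of_int m / of_nat K)"
  have zK: "\<zeta> ^ K = 1"
  proof -
    have "\<zeta> ^ K = exp (of_nat K * (2 * of_real pi * \<i> * of_int m / of_nat K))"
      unfolding \<zeta>_def by (rule exp_of_nat_mult[symmetric])
    also have "of_nat K * (2 * of_real pi * \<i> * of_int m / of_nat K) = 2 * of_real pi * \<i> * of_int m"
      using K by simp
    also have "exp \<dots> = 1" by (simp add: exp_eq_1)
    finally show ?thesis .
  qed
  have z1: "\<zeta> \<noteq> 1"
  proof
    assume "\<zeta> = 1"
    then obtain n :: int where n: "Im (2 * of_real pi * \<i> * of_int m / of_nat K) = of_int (2 * n) * pi"
      unfolding \<zeta>_def exp_eq_1 by blast
    have "Im (2 * of_real pi * \<i> * of_int m / of_nat K) = 2 * pi * m / K"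
      by (simp add: Im_divide_of_nat)
    with n have "2 * pi * m / K = 2 * n * pi" by simp
    hence "real_of_int m = real_of_int n * K" using K by (simp add: field_simps)
    hence "m = n * int K" by (metis of_int_eq_iff of_int_mult of_int_of_nat_eq)
    hence am: "\<bar>m\<bar> = \<bar>n\<bar> * int K" by (simp add: abs_mult)
    from \<open>m = n * int K\<close> m0 have "n \<noteq> 0" by auto
    hence "1 \<le> \<bar>n\<bar>" by linarith
    hence "int K \<le> \<bar>n\<bar> * int K" using mult_right_mono[of 1 "\<bar>n\<bar>" "int K"] by simp
    with am mK show False by linarith
  qed
  have "(\<Sum>l<K. \<zeta> ^ l) = (\<zeta> ^ K - 1) / (\<zeta> - 1)" using z1 by (rule geometric_sum)
  also have "\<dots> = 0" using zK by simp
  finally show ?thesis unfolding \<zeta>_def .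
qed

lemma coeff_extract:
  fixes A :: "('k::finite \<Rightarrow> nat) set" and g :: "('k \<Rightarrow> nat) \<Rightarrow> complex"
  assumes fin: "finite A" and deg: "\<forall>\<alpha>\<in>A. \<forall>k. \<alpha> k \<le> d"
    and bnd: "\<And>Z. (\<forall>k. cmod (Z k) = 1) \<Longrightarrow> cmod (\<Sum>\<alpha>\<in>A. g \<alpha> * (\<Prod>k\<in>UNIV. Z k ^ \<alpha> k)) \<le> B"
    and a0: "\<alpha>0 \<in> A"
  shows "cmod (g \<alpha>0) \<le> B"
proof -
  define K where "K = Suc d"
  define e where "e = (\<lambda>x::int. exp (2 * of_real pi * \<i> * of_int x / of_nat K))"
  define T where "T = PiE (UNIV::'k set) (\<lambda>_. {..<K})"
  define Q where "Q = (\<lambda>Z. \<Sum>\<alpha>\<in>A. g \<alpha> * (\<Prod>k\<in>UNIV. Z k ^ \<alpha> k))"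
  have e_pow: "e x ^ l = e (int l * x)" for x l
  proof -
    have "e x ^ l = exp (of_nat l * (2 * of_real pi * \<i> * of_int x / of_nat K))"
      unfolding e_def by (rule exp_of_nat_mult[symmetric])
    also have "of_nat l * (2 * of_real pi * \<i> * of_int x / of_nat K)
        = 2 * of_real pi * \<i> * of_int (int l * x) / (of_nat K :: complex)" by simp
    finally show ?thesis unfolding e_def .
  qed
  have e_mult: "e x * e y = e (x + y)" for x y
    unfolding e_def by (simp add: exp_add[symmetric] add_divide_distrib distrib_left)
  have e_norm: "cmod (e x) = 1" for x
    unfolding e_def by (simp add: norm_exp_eq_Re)
  have e0: "e 0 = 1" unfolding e_def by simp
  have pt: "e (int l) ^ a * e (- int (l * b)) = e (int a - int b) ^ l" for l a b
    by (simp add: e_pow e_mult algebra_simps)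
  have pt': "e (int l) ^ a * e (- (int l * int b)) = e (int a - int b) ^ l" for l a b
    using pt[of l a b] by simp
  have finT: "finite T" unfolding T_def by (simp add: finite_PiE)
  have "(\<Sum>l\<in>T. Q (\<lambda>k. e (int (l k))) * (\<Prod>k\<in>UNIV. e (- int (l k * \<alpha>0 k))))
      = (\<Sum>l\<in>T. \<Sum>\<alpha>\<in>A. g \<alpha> * (\<Prod>k\<in>UNIV. e (int (\<alpha> k) - int (\<alpha>0 k)) ^ l k))"
    unfolding Q_def sum_distrib_right
    by (intro sum.cong refl) (simp add: mult.assoc prod.distrib[symmetric] pt')
  also have "\<dots> = (\<Sum>\<alpha>\<in>A. g \<alpha> * (\<Sum>l\<in>T. \<Prod>k\<in>UNIV. e (int (\<alpha> k) - int (\<alpha>0 k)) ^ l k))"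
    by (subst sum.swap) (simp add: sum_distrib_left)
  also have "\<dots> = (\<Sum>\<alpha>\<in>A. g \<alpha> * (\<Prod>k\<in>UNIV. \<Sum>j<K. e (int (\<alpha> k) - int (\<alpha>0 k)) ^ j))"
    unfolding T_def by (subst prod_sum_PiE) auto
  also have "\<dots> = (\<Sum>\<alpha>\<in>A. if \<alpha> = \<alpha>0 then g \<alpha>0 * of_nat K ^ CARD('k) else 0)"
  proof (intro sum.cong refl)
    fix \<alpha> assume "\<alpha> \<in> A"
    show "g \<alpha> * (\<Prod>k\<in>UNIV. \<Sum>j<K. e (int (\<alpha> k) - int (\<alpha>0 k)) ^ j)
        = (if \<alpha> = \<alpha>0 then g \<alpha>0 * of_nat K ^ CARD('k) else 0)"
    proof (cases "\<alpha> = \<alpha>0")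
      case True
      thus ?thesis by (simp add: e0)
    next
      case False
      then obtain k where k: "\<alpha> k \<noteq> \<alpha>0 k" by auto
      have "(\<Sum>j<K. e (int (\<alpha> k) - int (\<alpha>0 k)) ^ j) = 0"
        unfolding e_def
      proof (rule root_sum_zero)
        show "0 < K" by (simp add: K_def)
        show "int (\<alpha> k) - int (\<alpha>0 k) \<noteq> 0" using k by simp
        show "\<bar>int (\<alpha> k) - int (\<alpha>0 k)\<bar> < int K"
        proof -
          have "\<alpha> k \<le> d" "\<alpha>0 k \<le> d" using deg \<open>\<alpha> \<in> A\<close> a0 by auto
          thus ?thesis by (simp add: K_def)
        qed
      qed
      hence "(\<Prod>k\<in>UNIV. \<Sum>j<K. e (int (\<alpha> k) - int (\<alpha>0 k)) ^ j) = 0"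
        by (intro prod_zero) auto
      thus ?thesis using False by simp
    qed
  qed
  also have "\<dots> = g \<alpha>0 * of_nat K ^ CARD('k)"
    using fin a0 by (simp add: sum.delta')
  finally have key: "(\<Sum>l\<in>T. Q (\<lambda>k. e (int (l k))) * (\<Prod>k\<in>UNIV. e (- int (l k * \<alpha>0 k))))
      = g \<alpha>0 * of_nat K ^ CARD('k)" .
  have cardT: "card T = K ^ CARD('k)"
    unfolding T_def by (simp add: card_PiE)
  have "cmod (g \<alpha>0) * real K ^ CARD('k)
      = cmod (\<Sum>l\<in>T. Q (\<lambda>k. e (int (l k))) * (\<Prod>k\<in>UNIV. e (- int (l k * \<alpha>0 k))))"
    unfolding key by (simp add: norm_mult norm_power)
  also have "\<dots> \<le> (\<Sum>l\<in>T. cmod (Q (\<lambda>k. e (int (l k))) * (\<Prod>k\<in>UNIV. e (- int (l k * \<alpha>0 k)))))"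
    by (rule norm_sum)
  also have "\<dots> \<le> (\<Sum>l\<in>T. B)"
  proof (intro sum_mono)
    fix l assume "l \<in> T"
    have "cmod (Q (\<lambda>k. e (int (l k)))) \<le> B" unfolding Q_def by (rule bnd) (simp add: e_norm)
    thus "cmod (Q (\<lambda>k. e (int (l k))) * (\<Prod>k\<in>UNIV. e (- int (l k * \<alpha>0 k)))) \<le> B"
      by (simp add: norm_mult prod_norm[symmetric] e_norm)
  qed
  also have "\<dots> = B * real K ^ CARD('k)" using cardT by simp
  finally show ?thesis by (simp add: K_def)
qed




lemma parallelogram_c: "cmod (w - 1) ^ 2 + cmod (w + 1) ^ 2 = 2 * cmod w ^ 2 + 2"
  unfolding cmod_power2 by (simp add: power2_eq_square algebra_simps)

lemma disk_in_ell:
  assumes "cmod z \<le> 1"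
  shows "cmod (z - 1) + cmod (z + 1) \<le> 10/3"
proof -
  define a where "a = cmod (z - 1)"
  define b where "b = cmod (z + 1)"
  have "cmod z ^ 2 \<le> 1" using assms by (simp add: power_le_one)
  hence ab: "a ^ 2 + b ^ 2 \<le> 4" using parallelogram_c[of z] unfolding a_def b_def by linarith
  have "(a + b) ^ 2 \<le> 2 * (a ^ 2 + b ^ 2)"
    using sum_squares_ge_zero[of "a - b" 0] by (simp add: power2_eq_square algebra_simps)
  also have "\<dots> \<le> 8" using ab by (simp add: algebra_simps)
  also have "\<dots> \<le> (10/3) ^ 2" by (simp add: power2_eq_square)
  finally have "(a + b) ^ 2 \<le> (10/3) ^ 2" .
  hence "a + b \<le> 10/3"
    by (rule power2_le_imp_le) simp
  thus ?thesis unfolding a_def b_def .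
qed

lemma lev_param:
  assumes lev: "cmod (z - 1) + cmod (z + 1) = 10/3"
  shows "\<exists>w. cmod w = 3 \<and> z = (w + inverse w) / 2"
proof -
  define s where "s = csqrt (z ^ 2 - 1)"
  define w0 where "w0 = z + s"
  have "w0 * (z - s) = z ^ 2 - s ^ 2" unfolding w0_def by (simp add: power2_eq_square algebra_simps)
  also have "\<dots> = 1" unfolding s_def by simp
  finally have p: "w0 * (z - s) = 1" .
  hence w00: "w0 \<noteq> 0" by auto
  have iw: "inverse w0 = z - s" using p by (simp add: inverse_unique)
  have z0: "z = (w0 + inverse w0) / 2" using iw unfolding w0_def by simp
  obtain w where zw: "z = (w + inverse w) / 2" and w1: "1 \<le> cmod w"
  proof (cases "1 \<le> cmod w0")
    case True thus ?thesis using z0 that by blast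
  next
    case False
    hence "1 \<le> cmod (inverse w0)" using w00
      by (simp add: norm_inverse) (metis less_imp_le one_le_inverse zero_less_norm_iff linorder_not_le)
    moreover have "z = (inverse w0 + inverse (inverse w0)) / 2" using z0 by (simp add: add.commute)
    ultimately show ?thesis using that by blast
  qed
  have w0': "w \<noteq> 0" using w1 by auto
  define t where "t = cmod w"
  have t1: "1 \<le> t" using w1 t_def by simp
  have "z - 1 = (w - 1) ^ 2 / (2 * w)" using w0' unfolding zw
    by (simp add: field_simps power2_eq_square)
  hence e1: "cmod (z - 1) = cmod (w - 1) ^ 2 / (2 * t)"
    unfolding t_def by (simp add: norm_divide norm_mult norm_power)
  have "z + 1 = (w + 1) ^ 2 / (2 * w)" using w0' unfolding zw
    by (simp add: field_simps power2_eq_square)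
  hence e2: "cmod (z + 1) = cmod (w + 1) ^ 2 / (2 * t)"
    unfolding t_def by (simp add: norm_divide norm_mult norm_power)
  have "cmod (z - 1) + cmod (z + 1) = (2 * t ^ 2 + 2) / (2 * t)"
    unfolding e1 e2 using parallelogram_c[of w] t_def by (simp add: add_divide_distrib[symmetric])
  with lev have "(2 * t ^ 2 + 2) / (2 * t) = 10/3" by simp
  hence "3 * (2 * t ^ 2 + 2) = 10 * (2 * t)" using t1 by (simp add: field_simps)
  hence "(t - 3) * (3 * t - 1) = 0" by (simp add: algebra_simps power2_eq_square)
  hence "t = 3" using t1 by auto
  thus ?thesis using zw t_def by (intro exI[of _ w]) simp
qed

definition Ell :: "complex set" where "Ell = {z. cmod (z - 1) + cmod (z + 1) \<le> 10/3}"

lemma Ell_closed: "closed Ell"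
  unfolding Ell_def by (intro closed_Collect_le continuous_intros)

lemma Ell_bounded: "bounded Ell"
proof -
  have "cmod z \<le> 5/3" if "z \<in> Ell" for z
  proof -
    have "(z + 1) + (z - 1) = 2 * z" by simp
    hence "2 * cmod z \<le> cmod (z - 1) + cmod (z + 1)"
      using norm_triangle_ineq[of "z + 1" "z - 1"] by (simp add: norm_mult)
    thus ?thesis using that unfolding Ell_def by simp
  qed
  thus ?thesis unfolding bounded_iff by blast
qed

lemma Ell_frontier: "z \<in> frontier Ell \<Longrightarrow> cmod (z - 1) + cmod (z + 1) = 10/3"
proof -
  assume z: "z \<in> frontier Ell"
  have "open {z. cmod (z - 1) + cmod (z + 1) < 10/3}"
    by (intro open_Collect_less continuous_intros)
  hence "{z. cmod (z - 1) + cmod (z + 1) < 10/3} \<subseteq> interior Ell"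
    by (intro interior_maximal) (auto simp: Ell_def)
  moreover have "z \<in> Ell" "z \<notin> interior Ell"
    using z Ell_closed by (auto simp: frontier_def)
  ultimately show ?thesis unfolding Ell_def by force
qed




definition QC :: "('k::finite \<Rightarrow> nat) set \<Rightarrow> (('k \<Rightarrow> nat) \<Rightarrow> real) \<Rightarrow> ('k \<Rightarrow> complex) \<Rightarrow> complex" where
  "QC A g Z = (\<Sum>\<alpha>\<in>A. complex_of_real (g \<alpha>) * (\<Prod>k\<in>UNIV. Z k ^ \<alpha> k))"

lemma QC_real: "QC A g (\<lambda>k. of_real (x k)) = of_real (\<Sum>\<alpha>\<in>A. g \<alpha> * (\<Prod>k\<in>UNIV. x k ^ \<alpha> k))"
  by (simp add: QC_def)

lemma QC_upd_holo: "(\<lambda>\<zeta>. QC A g (Z(j := \<zeta>))) holomorphic_on S"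
proof -
  have h: "(\<lambda>\<zeta>. (Z(j := \<zeta>)) k ^ n) holomorphic_on S" for k n
    by (cases "k = j") (auto intro!: holomorphic_intros)
  show ?thesis unfolding QC_def by (intro holomorphic_intros h)
qed

lemma cnj_unit: "cmod u = 1 \<Longrightarrow> cnj u = inverse u"
proof -
  assume "cmod u = 1"
  hence "u * cnj u = 1" using complex_norm_square[of u] by simp
  thus ?thesis by (simp add: inverse_unique)
qed

lemma base_bound:
  fixes A :: "('k::finite \<Rightarrow> nat) set"
  assumes fin: "finite A" and deg: "\<forall>\<alpha>\<in>A. sum \<alpha> UNIV \<le> d"
    and realb: "\<forall>x::'k\<Rightarrow>real. (\<forall>k. \<bar>x k\<bar> \<le> 1) \<longrightarrow> \<bar>\<Sum>\<alpha>\<in>A. g \<alpha> * (\<Prod>k\<in>UNIV. x k ^ \<alpha> k)\<bar> \<le> M"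
    and lev: "\<forall>k. cmod (Z k - 1) + cmod (Z k + 1) = 10/3"
  shows "cmod (QC A g Z) \<le> 3 ^ d * M"
proof -
  have "\<forall>k. \<exists>w. cmod w = 3 \<and> Z k = (w + inverse w) / 2" using lev lev_param by blast
  then obtain w where w: "\<And>k. cmod (w k) = 3" "\<And>k. Z k = (w k + inverse (w k)) / 2"
    by metis
  define b where "b = (\<lambda>k. w k / 3)"
  have b1: "cmod (b k) = 1" for k unfolding b_def using w(1)[of k] by (simp add: norm_divide)
  have b0: "b k \<noteq> 0" for k using b1[of k] by auto
  define y where "y = (\<lambda>v k. (b k + v ^ 2 / b k) / 2)"
  define G where "G = (\<lambda>v. \<Sum>\<alpha>\<in>A. complex_of_real (g \<alpha>) * v ^ (d - sum \<alpha> UNIV) * (\<Prod>k\<in>UNIV. y v k ^ \<alpha> k))"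
  have holoG: "G holomorphic_on UNIV"
    unfolding G_def y_def by (intro holomorphic_intros) (auto simp: b0)
  have prodv: "(\<Prod>k\<in>UNIV. (v * x k) ^ \<alpha> k) = v ^ sum \<alpha> UNIV * (\<Prod>k\<in>UNIV. x k ^ \<alpha> k)"
    for v :: complex and x \<alpha>
    by (simp add: power_mult_distrib prod.distrib power_sum)
  have sphere: "cmod (G v) \<le> M" if v: "cmod v = 1" for v
  proof -
    define x where "x = (\<lambda>k. Re (b k / v))"
    have v0: "v \<noteq> 0" using v by auto
    have yv: "y v k = v * of_real (x k)" for k
    proof -
      have u1: "cmod (b k / v) = 1" using b1[of k] v by (simp add: norm_divide)
      have "of_real (x k) = (b k / v + cnj (b k / v)) / 2"
        unfolding x_def using complex_add_cnj[of "b k / v"] by simp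
      also have "cnj (b k / v) = v / b k" using cnj_unit[OF u1] by (simp add: inverse_eq_divide)
      finally show ?thesis unfolding y_def using v0 b0[of k]
        by (simp add: field_simps power2_eq_square)
    qed
    have xb: "\<bar>x k\<bar> \<le> 1" for k
      unfolding x_def using abs_Re_le_cmod[of "b k / v"] b1[of k] v by (simp add: norm_divide)
    have "G v = (\<Sum>\<alpha>\<in>A. complex_of_real (g \<alpha>) * v ^ (d - sum \<alpha> UNIV) * (v ^ sum \<alpha> UNIV * (\<Prod>k\<in>UNIV. of_real (x k) ^ \<alpha> k)))"
      unfolding G_def yv prodv ..
    also have "\<dots> = v ^ d * QC A g (\<lambda>k. of_real (x k))"
      unfolding QC_def sum_distrib_left
    proof (intro sum.cong refl)
      fix \<alpha> assume "\<alpha> \<in> A"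
      hence "d - sum \<alpha> UNIV + sum \<alpha> UNIV = d" using deg by auto
      hence "v ^ (d - sum \<alpha> UNIV) * v ^ sum \<alpha> UNIV = v ^ d" by (metis power_add)
      thus "complex_of_real (g \<alpha>) * v ^ (d - sum \<alpha> UNIV) * (v ^ sum \<alpha> UNIV * (\<Prod>k\<in>UNIV. of_real (x k) ^ \<alpha> k))
          = v ^ d * (complex_of_real (g \<alpha>) * (\<Prod>k\<in>UNIV. of_real (x k) ^ \<alpha> k))"
        by (metis (no_types, lifting) mult.assoc mult.left_commute)
    qed
    finally have "cmod (G v) = cmod (QC A g (\<lambda>k. of_real (x k)))" using v by (simp add: norm_mult norm_power)
    also have "\<dots> = \<bar>\<Sum>\<alpha>\<in>A. g \<alpha> * (\<Prod>k\<in>UNIV. x k ^ \<alpha> k)\<bar>" by (simp only: QC_real norm_of_real)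
    also have "\<dots> \<le> M" using realb xb by blast
    finally show ?thesis .
  qed
  have G3: "cmod (G (1/3)) \<le> M"
  proof (rule maximum_modulus_frontier[of G "cball 0 1"])
    show "G holomorphic_on interior (cball 0 1)" using holoG by (rule holomorphic_on_subset) auto
    show "continuous_on (closure (cball 0 1)) G"
      using holoG holomorphic_on_imp_continuous_on continuous_on_subset by blast
    show "bounded (cball (0::complex) 1)" by simp
    show "cmod (G z) \<le> M" if "z \<in> frontier (cball 0 1)" for z
      using that sphere by simp
    show "1/3 \<in> cball (0::complex) 1" by (simp add: norm_divide)
  qed
  have y3: "y (1/3) k = (1/3) * Z k" for k
  proof -
    have wk: "w k \<noteq> 0" using w(1)[of k] by auto
    show ?thesis unfolding y_def b_def w(2)[of k] using wk
      by (simp add: field_simps power2_eq_square)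
  qed
  have "G (1/3) = (\<Sum>\<alpha>\<in>A. complex_of_real (g \<alpha>) * (1/3) ^ (d - sum \<alpha> UNIV) * ((1/3) ^ sum \<alpha> UNIV * (\<Prod>k\<in>UNIV. Z k ^ \<alpha> k)))"
    unfolding G_def y3 prodv ..
  also have "\<dots> = (1/3) ^ d * QC A g Z"
    unfolding QC_def sum_distrib_left
  proof (intro sum.cong refl)
    fix \<alpha> assume "\<alpha> \<in> A"
    hence "d - sum \<alpha> UNIV + sum \<alpha> UNIV = d" using deg by auto
    hence "(1/3::complex) ^ (d - sum \<alpha> UNIV) * (1/3) ^ sum \<alpha> UNIV = (1/3) ^ d" by (metis power_add)
    thus "complex_of_real (g \<alpha>) * (1/3) ^ (d - sum \<alpha> UNIV) * ((1/3) ^ sum \<alpha> UNIV * (\<Prod>k\<in>UNIV. Z k ^ \<alpha> k))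
        = (1/3) ^ d * (complex_of_real (g \<alpha>) * (\<Prod>k\<in>UNIV. Z k ^ \<alpha> k))"
      by (metis (no_types, lifting) mult.assoc mult.left_commute)
  qed
  finally have G13: "G (1/3) = (1/3) ^ d * QC A g Z" .
  have h3: "(3::complex) ^ d * (1/3) ^ d = 1" by (simp add: power_mult_distrib[symmetric])
  have "QC A g Z = 3 ^ d * G (1/3)" unfolding G13 by (simp add: h3 mult.assoc[symmetric])
  hence "cmod (QC A g Z) = 3 ^ d * cmod (G (1/3))"
    by (simp add: norm_mult norm_power)
  also have "\<dots> \<le> 3 ^ d * M" using G3 by simp
  finally show ?thesis .
qed

lemma ell_ind:
  fixes J :: "'k::finite set"
  assumes "finite J"
    and base: "\<And>Z. (\<forall>k. cmod (Z k - 1) + cmod (Z k + 1) = 10/3) \<Longrightarrow> cmod (QC A g Z) \<le> B"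
  shows "(\<forall>k\<in>J. Z k \<in> Ell) \<Longrightarrow> (\<forall>k. k \<notin> J \<longrightarrow> cmod (Z k - 1) + cmod (Z k + 1) = 10/3)
     \<Longrightarrow> cmod (QC A g Z) \<le> B"
  using assms(1)
proof (induction J arbitrary: Z rule: finite_induct)
  case empty
  thus ?case using base by auto
next
  case (insert j J)
  have "cmod (QC A g (Z(j := Z j))) \<le> B"
  proof (rule maximum_modulus_frontier[of "\<lambda>\<zeta>. QC A g (Z(j := \<zeta>))" Ell])
    show "(\<lambda>\<zeta>. QC A g (Z(j := \<zeta>))) holomorphic_on interior Ell" by (rule QC_upd_holo)
    show "continuous_on (closure Ell) (\<lambda>\<zeta>. QC A g (Z(j := \<zeta>)))"
      by (rule holomorphic_on_imp_continuous_on) (rule QC_upd_holo)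
    show "bounded Ell" by (rule Ell_bounded)
    show "Z j \<in> Ell" using insert.prems by auto
    fix z assume z: "z \<in> frontier Ell"
    show "cmod (QC A g (Z(j := z))) \<le> B"
    proof (rule insert.IH)
      show "\<forall>k\<in>J. (Z(j := z)) k \<in> Ell" using insert.prems insert.hyps by auto
      show "\<forall>k. k \<notin> J \<longrightarrow> cmod ((Z(j := z)) k - 1) + cmod ((Z(j := z)) k + 1) = 10/3"
      proof (intro allI impI)
        fix k assume kJ: "k \<notin> J"
        show "cmod ((Z(j := z)) k - 1) + cmod ((Z(j := z)) k + 1) = 10/3"
        proof (cases "k = j")
          case True thus ?thesis using Ell_frontier[OF z] by simp
        next
          case False
          with kJ have "k \<notin> insert j J" by simp
          hence "cmod (Z k - 1) + cmod (Z k + 1) = 10/3" using insert.prems(2) by blast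
          thus ?thesis using False by simp
        qed
      qed
    qed
  qed
  thus ?case by simp
qed

lemma coeff_bound_real:
  fixes A :: "('k::finite \<Rightarrow> nat) set"
  assumes fin: "finite A" and deg: "\<forall>\<alpha>\<in>A. sum \<alpha> UNIV \<le> d"
    and realb: "\<forall>x::'k\<Rightarrow>real. (\<forall>k. \<bar>x k\<bar> \<le> 1) \<longrightarrow> \<bar>\<Sum>\<alpha>\<in>A. g \<alpha> * (\<Prod>k\<in>UNIV. x k ^ \<alpha> k)\<bar> \<le> M"
    and a0: "\<alpha>0 \<in> A"
  shows "\<bar>g \<alpha>0\<bar> \<le> 3 ^ d * M"
proof -
  have "cmod (complex_of_real (g \<alpha>0)) \<le> 3 ^ d * M"
  proof (rule coeff_extract[of A d "\<lambda>\<alpha>. complex_of_real (g \<alpha>)"])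
    show "finite A" by fact
    show "\<forall>\<alpha>\<in>A. \<forall>k. \<alpha> k \<le> d"
    proof (intro ballI allI)
      fix \<alpha> k assume "\<alpha> \<in> A"
      have "\<alpha> k \<le> sum \<alpha> UNIV" by (rule member_le_sum) auto
      thus "\<alpha> k \<le> d" using deg \<open>\<alpha> \<in> A\<close> by auto
    qed
    show "\<alpha>0 \<in> A" by fact
    fix Z :: "'k \<Rightarrow> complex" assume Z: "\<forall>k. cmod (Z k) = 1"
    have "cmod (QC A g Z) \<le> 3 ^ d * M"
    proof (rule ell_ind[of UNIV])
      show "finite (UNIV :: 'k set)" by simp
      show "cmod (QC A g Z') \<le> 3 ^ d * M" if "\<forall>k. cmod (Z' k - 1) + cmod (Z' k + 1) = 10/3" for Z'
        using base_bound[OF fin deg realb that] .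
      show "\<forall>k\<in>UNIV. Z k \<in> Ell" using Z disk_in_ell by (auto simp: Ell_def)
    qed auto
    thus "cmod (\<Sum>\<alpha>\<in>A. complex_of_real (g \<alpha>) * (\<Prod>k\<in>UNIV. Z k ^ \<alpha> k)) \<le> 3 ^ d * M"
      unfolding QC_def .
  qed
  thus ?thesis by simp
qed




lemma sum_UNIV_Plus: "sum h (UNIV :: ('a::finite + 'b::finite) set) = sum (h \<circ> Inl) UNIV + sum (h \<circ> Inr) UNIV"
  by (subst UNIV_Plus_UNIV[symmetric]) (rule sum.Plus; simp)

lemma prod_UNIV_Plus: "prod h (UNIV :: ('a::finite + 'b::finite) set) = prod (h \<circ> Inl) UNIV * prod (h \<circ> Inr) UNIV"
  by (subst UNIV_Plus_UNIV[symmetric]) (rule prod.Plus; simp)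

lemma fact_mult_le_nat: "fact m * fact n \<le> (fact (m + n) :: nat)"
proof -
  have e: "fact m * fact (m + n - m) * ((m + n) choose m) = (fact (m + n) :: nat)"
    by (rule binomial_fact_lemma) simp
  have c1: "(m + n) choose m \<ge> 1" by (simp add: Suc_leI)
  have "fact m * fact n * 1 \<le> fact m * fact n * ((m + n) choose m)"
    using c1 by (intro mult_le_mono2)
  also have "\<dots> = fact (m + n)" using e by simp
  finally show ?thesis by simp
qed

lemma prod_fact_le: "finite I \<Longrightarrow> (\<Prod>i\<in>I. fact (f i)) \<le> (fact (sum f I) :: nat)"
proof (induction I rule: finite_induct)
  case empty thus ?case by simp
next
  case (insert x I)
  have "(\<Prod>i\<in>insert x I. fact (f i)) = fact (f x) * (\<Prod>i\<in>I. (fact (f i) :: nat))"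
    using insert by simp
  also have "\<dots> \<le> fact (f x) * fact (sum f I)" using insert by (intro mult_le_mono2)
  also have "\<dots> \<le> fact (f x + sum f I)" by (rule fact_mult_le_nat)
  also have "f x + sum f I = sum f (insert x I)" using insert by simp
  finally show ?case .
qed

lemma multinom_ge1: "multinom (a :: 'n::finite \<Rightarrow> nat) (b :: 'm::finite \<Rightarrow> nat) \<ge> 1"
proof -
  have pa: "(\<Prod>i\<in>UNIV. fact (a i)) \<le> (fact (mdeg a) :: nat)"
    unfolding mdeg_def by (rule prod_fact_le) simp
  have pb: "(\<Prod>j\<in>UNIV. fact (b j)) \<le> (fact (mdeg b) :: nat)"
    unfolding mdeg_def by (rule prod_fact_le) simp
  have "(\<Prod>i\<in>UNIV. fact (a i)) * (\<Prod>j\<in>UNIV. fact (b j)) \<le> (fact (mdeg a) * fact (mdeg b) :: nat)"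
    using pa pb by (rule mult_le_mono)
  also have "\<dots> \<le> fact (mdeg a + mdeg b)" by (rule fact_mult_le_nat)
  finally have le: "real ((\<Prod>i\<in>UNIV. fact (a i)) * (\<Prod>j\<in>UNIV. fact (b j))) \<le> real (fact (mdeg a + mdeg b))"
    by (simp only: of_nat_le_iff)
  have pos: "(0::real) < (\<Prod>i\<in>UNIV. fact (a i)) * (\<Prod>j\<in>UNIV. fact (b j))"
    by (intro mult_pos_pos prod_pos) auto
  have "(\<Prod>i\<in>UNIV. fact (a i)) * (\<Prod>j\<in>UNIV. fact (b j)) \<le> (fact (mdeg a + mdeg b) :: real)"
    using le by (simp add: of_nat_fact)
  thus ?thesis unfolding multinom_def using pos by simp
qed

lemma finite_monomials: "finite (monomials_upto d :: (('n::finite \<Rightarrow> nat) \<times> ('m::finite \<Rightarrow> nat)) set)"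
proof -
  have "monomials_upto d \<subseteq> (PiE (UNIV::'n set) (\<lambda>_. {..d})) \<times> (PiE (UNIV::'m set) (\<lambda>_. {..d}))"
  proof
    fix p assume p: "p \<in> (monomials_upto d :: (('n \<Rightarrow> nat) \<times> ('m \<Rightarrow> nat)) set)"
    obtain a b where ab: "p = (a, b)" by (cases p)
    have s: "mdeg a + mdeg b \<le> d" using p ab by (simp add: monomials_upto_def)
    have "a i \<le> d" for i
    proof -
      have "a i \<le> mdeg a" unfolding mdeg_def by (rule member_le_sum) auto
      thus ?thesis using s by linarith
    qed
    moreover have "b j \<le> d" for j
    proof -
      have "b j \<le> mdeg b" unfolding mdeg_def by (rule member_le_sum) auto
      thus ?thesis using s by linarith
    qed
    ultimately show "p \<in> (PiE (UNIV::'n set) (\<lambda>_. {..d})) \<times> (PiE (UNIV::'m set) (\<lambda>_. {..d}))"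
      using ab by (auto simp: PiE_iff)
  qed
  moreover have "finite ((PiE (UNIV::'n set) (\<lambda>_. {..d})) \<times> (PiE (UNIV::'m set) (\<lambda>_. {..d})))"
    by (intro finite_cartesian_product finite_PiE) auto
  ultimately show ?thesis by (rule finite_subset)
qed

lemma final_part:
  fixes c :: "('n::finite \<Rightarrow> nat) \<times> ('m::finite \<Rightarrow> nat) \<Rightarrow> real"
  assumes key2: "\<And>p0. p0 \<in> monomials_upto d \<Longrightarrow> \<bar>c p0\<bar> * cr ^ d \<le> 3 ^ d * M"
    and crpos: "0 < cr" and M0: "0 \<le> M"
  shows "coeff_norm d c \<le> 3 ^ (d + 1) * (1 / cr) ^ d * M"
proof -
  have ne: "(monomials_upto d :: (('n \<Rightarrow> nat) \<times> ('m \<Rightarrow> nat)) set) \<noteq> {}"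
  proof -
    have "((\<lambda>_. 0), (\<lambda>_. 0)) \<in> (monomials_upto d :: (('n \<Rightarrow> nat) \<times> ('m \<Rightarrow> nat)) set)"
      by (simp add: monomials_upto_def mdeg_def)
    thus ?thesis by auto
  qed
  have fin: "finite ((\<lambda>(a, b). \<bar>c (a, b)\<bar> / multinom a b) ` monomials_upto d)"
    by (intro finite_imageI finite_monomials)
  have ne2: "(\<lambda>(a, b). \<bar>c (a, b)\<bar> / multinom a b) ` monomials_upto d \<noteq> {}" using ne by simp
  have bnd: "v \<le> 3 ^ (d + 1) * (1 / cr) ^ d * M"
    if vin: "v \<in> (\<lambda>(a, b). \<bar>c (a, b)\<bar> / multinom a b) ` monomials_upto d" for v
  proof -
    obtain a b where ab: "(a, b) \<in> monomials_upto d" and v: "v = \<bar>c (a, b)\<bar> / multinom a b"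
      using vin by auto
    have m1: "multinom a b \<ge> 1" by (rule multinom_ge1)
    have "v \<le> \<bar>c (a, b)\<bar> / 1" unfolding v using m1
      by (intro divide_left_mono) auto
    hence "v \<le> \<bar>c (a, b)\<bar>" by simp
    also have "\<dots> \<le> 3 ^ d * M / cr ^ d"
      using key2[OF ab] crpos by (simp add: le_divide_eq)
    also have "\<dots> \<le> 3 ^ (d + 1) * (1 / cr) ^ d * M"
    proof -
      have "3 ^ d * M / cr ^ d = 3 ^ d * (1 / cr) ^ d * M" by (simp add: power_one_over)
      also have "\<dots> \<le> 3 ^ (d + 1) * (1 / cr) ^ d * M"
        using M0 crpos by (intro mult_right_mono) auto
      finally show ?thesis .
    qed
    finally show ?thesis .
  qed
  show ?thesis unfolding coeff_norm_def using fin ne2 bnd by (simp add: Max_le_iff)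
qed




unbundle no fps_syntax

lemma peval_bound_simple:
  fixes x :: "real^'n::finite" and u :: "real^'m::finite"
  assumes "\<forall>i. \<bar>x $ i\<bar> \<le> 1" "\<forall>j. \<bar>u $ j\<bar> \<le> 1"
  shows "\<bar>peval d c x u\<bar> \<le> (\<Sum>p\<in>monomials_upto d. \<bar>c p\<bar>)"
proof -
  have "\<bar>peval d c x u\<bar> \<le> (\<Sum>p\<in>monomials_upto d. \<bar>c (fst p, snd p) * (\<Prod>i\<in>UNIV. (x $ i) ^ fst p i) * (\<Prod>j\<in>UNIV. (u $ j) ^ snd p j)\<bar>)"
    unfolding peval_def by (simp add: case_prod_beta sum_abs)
  also have "\<dots> \<le> (\<Sum>p\<in>monomials_upto d. \<bar>c p\<bar>)"
  proof (intro sum_mono)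
    fix p :: "('n \<Rightarrow> nat) \<times> ('m \<Rightarrow> nat)"
    have p1: "\<bar>\<Prod>i\<in>UNIV. (x $ i) ^ fst p i\<bar> \<le> 1"
      unfolding abs_prod by (intro prod_le_1) (auto simp: power_abs assms power_le_one)
    have p2: "\<bar>\<Prod>j\<in>UNIV. (u $ j) ^ snd p j\<bar> \<le> 1"
      unfolding abs_prod by (intro prod_le_1) (auto simp: power_abs assms power_le_one)
    have "\<bar>\<Prod>i\<in>UNIV. (x $ i) ^ fst p i\<bar> * \<bar>\<Prod>j\<in>UNIV. (u $ j) ^ snd p j\<bar> \<le> 1"
      using p1 p2 by (simp add: mult_le_one)
    hence "\<bar>c p\<bar> * (\<bar>\<Prod>i\<in>UNIV. (x $ i) ^ fst p i\<bar> * \<bar>\<Prod>j\<in>UNIV. (u $ j) ^ snd p j\<bar>) \<le> \<bar>c p\<bar> * 1"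
      by (intro mult_left_mono) auto
    thus "\<bar>c (fst p, snd p) * (\<Prod>i\<in>UNIV. (x $ i) ^ fst p i) * (\<Prod>j\<in>UNIV. (u $ j) ^ snd p j)\<bar> \<le> \<bar>c p\<bar>"
      by (simp add: abs_mult mult.assoc)
  qed
  finally show ?thesis .
qed

theorem corollary1:
  fixes X :: "(real^'n::finite) set" and U :: "(real^'m::finite) set"
    and d :: nat and c :: "('n \<Rightarrow> nat) \<times> ('m \<Rightarrow> nat) \<Rightarrow> real" and r :: real
  assumes "compact X" and "compact U"
    and "\<forall>x\<in>X. \<forall>i. \<bar>x $ i\<bar> \<le> 1" and "\<forall>u\<in>U. \<forall>j. \<bar>u $ j\<bar> \<le> 1"
    and "0 \<in> interior X" and "0 \<in> interior U"
    and "r = 1 / cube_radius X U"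
  shows "coeff_norm d c \<le> 3 ^ (d + 1) * r ^ d * sup_norm d c (X \<times> U)"
proof -
  define cube where "cube = (\<lambda>t::real. {(x::real^'n, u::real^'m). (\<forall>i. \<bar>x $ i\<bar> \<le> t) \<and> (\<forall>j. \<bar>u $ j\<bar> \<le> t)})"
  define S where "S = {s. s > 0 \<and> cube s \<subseteq> X \<times> U}"
  define cr where "cr = cube_radius X U"
  have crS: "cr = Sup S" unfolding cr_def cube_radius_def S_def cube_def by simp
  obtain eX where eX: "eX > 0" "ball 0 eX \<subseteq> X" using assms(5) mem_interior by blast
  obtain eU where eU: "eU > 0" "ball 0 eU \<subseteq> U" using assms(6) mem_interior by blast
  define t0 where "t0 = min eX eU / (2 * (real CARD('n) + real CARD('m)))"
  have cpos: "0 < 2 * (real CARD('n) + real CARD('m))"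
  proof -
    have "0 < CARD('n)" by (rule finite_UNIV_card_ge_0) simp
    hence "0 < real CARD('n)" by simp
    moreover have "0 \<le> real CARD('m)" by simp
    ultimately show ?thesis by (intro mult_pos_pos add_pos_nonneg) auto
  qed
  have t0pos: "t0 > 0" unfolding t0_def using eX eU cpos by simp
  have t0S: "t0 \<in> S"
  proof -
    have "(x, u) \<in> X \<times> U" if "(x, u) \<in> cube t0" for x u
    proof -
      have xb: "\<forall>i. \<bar>x $ i\<bar> \<le> t0" and ub: "\<forall>j. \<bar>u $ j\<bar> \<le> t0" using that unfolding cube_def by auto
      have "norm x \<le> (\<Sum>i\<in>UNIV. \<bar>x $ i\<bar>)" by (rule norm_le_l1_cart)
      also have "\<dots> \<le> (\<Sum>i\<in>(UNIV::'n set). t0)" using xb by (intro sum_mono) auto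
      also have "\<dots> = real CARD('n) * t0" by simp
      also have "\<dots> < eX"
      proof -
        have "real CARD('n) * t0 < (2 * (real CARD('n) + real CARD('m))) * t0"
          using t0pos cpos by (intro mult_strict_right_mono) auto
        also have "\<dots> = min eX eU" unfolding t0_def using cpos by simp
        also have "\<dots> \<le> eX" by simp
        finally show ?thesis .
      qed
      finally have "x \<in> X" using eX by (auto simp: dist_norm)
      have "norm u \<le> (\<Sum>j\<in>UNIV. \<bar>u $ j\<bar>)" by (rule norm_le_l1_cart)
      also have "\<dots> \<le> (\<Sum>j\<in>(UNIV::'m set). t0)" using ub by (intro sum_mono) auto
      also have "\<dots> = real CARD('m) * t0" by simp
      also have "\<dots> < eU"
      proof -
        have "real CARD('m) * t0 < (2 * (real CARD('n) + real CARD('m))) * t0"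
          using t0pos cpos by (intro mult_strict_right_mono) auto
        also have "\<dots> = min eX eU" unfolding t0_def using cpos by simp
        also have "\<dots> \<le> eU" by simp
        finally show ?thesis .
      qed
      finally have "u \<in> U" using eU by (auto simp: dist_norm)
      with \<open>x \<in> X\<close> show ?thesis by simp
    qed
    thus ?thesis unfolding S_def using t0pos by auto
  qed
  have S1: "s \<le> 1" if "s \<in> S" for s
  proof -
    have s0: "s > 0" and sub: "cube s \<subseteq> X \<times> U" using that unfolding S_def by auto
    have "((\<chi> i. s) :: real^'n, (\<chi> j. s) :: real^'m) \<in> cube s" unfolding cube_def using s0 by simp
    hence "((\<chi> i. s) :: real^'n) \<in> X" using sub by auto
    hence "\<bar>((\<chi> i. s) :: real^'n) $ undefined\<bar> \<le> 1" using assms(3) by blast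
    thus ?thesis using s0 by simp
  qed
  have bddS: "bdd_above S" using S1 by (auto simp: bdd_above_def)
  have crpos: "0 < cr" unfolding crS using cSup_upper[OF t0S bddS] t0pos by simp
  have cr1: "cr \<le> 1" unfolding crS using t0S S1 by (intro cSup_least) auto
  have cube_sub: "cube t \<subseteq> X \<times> U" if tt: "0 < t" "t < cr" for t
  proof -
    have "S \<noteq> {}" using t0S by blast
    hence "\<exists>s\<in>S. t < s" using less_cSup_iff[of S t] bddS tt(2) crS by simp
    then obtain s where s: "s \<in> S" "t < s" by blast
    have "cube t \<subseteq> cube s" unfolding cube_def using s(2) by (auto; metis less_imp_le order_trans)
    thus ?thesis using s(1) unfolding S_def by auto
  qed
  define M where "M = sup_norm d c (X \<times> U)"
  have bdd: "bdd_above ((\<lambda>z. \<bar>peval d c (fst z) (snd z)\<bar>) ` (X \<times> U))"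
  proof (rule bdd_aboveI2)
    fix z assume "z \<in> X \<times> U"
    thus "\<bar>peval d c (fst z) (snd z)\<bar> \<le> (\<Sum>p\<in>monomials_upto d. \<bar>c p\<bar>)"
      using assms(3,4) by (intro peval_bound_simple) auto
  qed
  have Mb: "\<bar>peval d c x u\<bar> \<le> M" if "(x, u) \<in> X \<times> U" for x u
    unfolding M_def sup_norm_def using cSUP_upper[OF that bdd] by simp
  have M0: "0 \<le> M"
  proof -
    have "0 \<in> X" using assms(5) interior_subset by blast
    moreover have "0 \<in> U" using assms(6) interior_subset by blast
    ultimately have "(0, 0) \<in> X \<times> U" by simp
    thus ?thesis using Mb[of 0 0] by (meson abs_ge_zero order_trans)
  qed
  define F where "F = (\<lambda>p::('n \<Rightarrow> nat) \<times> ('m \<Rightarrow> nat). case_sum (fst p) (snd p))"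
  have injF: "inj_on F (monomials_upto d)"
  proof (rule inj_onI)
    fix p q assume "F p = F q"
    hence "F p \<circ> Inl = F q \<circ> Inl" "F p \<circ> Inr = F q \<circ> Inr" by auto
    thus "p = q" unfolding F_def by (simp add: prod_eq_iff case_sum_o_inj)
  qed
  have sumF: "sum (F p) UNIV = mdeg (fst p) + mdeg (snd p)" for p
    unfolding F_def mdeg_def sum_UNIV_Plus by (simp add: case_sum_o_inj)
  have key: "\<bar>c p0\<bar> * t ^ d \<le> 3 ^ d * M" if p0: "p0 \<in> monomials_upto d" and t: "0 < t" "t < cr" for p0 t
  proof -
    define g where "g = (\<lambda>\<alpha>. c (\<alpha> \<circ> Inl, \<alpha> \<circ> Inr) * t ^ sum \<alpha> UNIV)"
    have finA: "finite (F ` monomials_upto d)" by (intro finite_imageI finite_monomials)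
    have degA: "\<forall>\<alpha>\<in>F ` monomials_upto d. sum \<alpha> UNIV \<le> d"
      using sumF by (auto simp: monomials_upto_def)
    have realb: "\<forall>y::('n + 'm)\<Rightarrow>real. (\<forall>k. \<bar>y k\<bar> \<le> 1) \<longrightarrow>
        \<bar>\<Sum>\<alpha>\<in>F ` monomials_upto d. g \<alpha> * (\<Prod>k\<in>UNIV. y k ^ \<alpha> k)\<bar> \<le> M"
    proof (intro allI impI)
      fix y :: "('n + 'm) \<Rightarrow> real" assume y: "\<forall>k. \<bar>y k\<bar> \<le> 1"
      define xx where "xx = (\<chi> i. t * y (Inl i) :: real^'n)"
      define uu where "uu = (\<chi> j. t * y (Inr j) :: real^'m)"
      have pw: "(\<Prod>i\<in>UNIV. (t * z i) ^ a i) = t ^ mdeg a * (\<Prod>i\<in>UNIV. z i ^ a i)"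
        for z :: "'q::finite \<Rightarrow> real" and a
        unfolding mdeg_def by (simp add: power_mult_distrib prod.distrib power_sum)
      have "(\<Sum>\<alpha>\<in>F ` monomials_upto d. g \<alpha> * (\<Prod>k\<in>UNIV. y k ^ \<alpha> k))
          = (\<Sum>p\<in>monomials_upto d. g (F p) * (\<Prod>k\<in>UNIV. y k ^ F p k))"
        using injF by (simp add: sum.reindex)
      also have "\<dots> = peval d c xx uu"
        unfolding peval_def
      proof (intro sum.cong refl)
        fix p :: "('n \<Rightarrow> nat) \<times> ('m \<Rightarrow> nat)" assume "p \<in> monomials_upto d"
        obtain a b where ab: "p = (a, b)" by (cases p)
        have "g (F p) * (\<Prod>k\<in>UNIV. y k ^ F p k)
            = c (a, b) * t ^ (mdeg a + mdeg b) * ((\<Prod>i\<in>UNIV. y (Inl i) ^ a i) * (\<Prod>j\<in>UNIV. y (Inr j) ^ b j))"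
          unfolding g_def sumF ab by (simp add: F_def prod_UNIV_Plus case_sum_o_inj)
        also have "\<dots> = c (a, b) * (t ^ mdeg a * (\<Prod>i\<in>UNIV. y (Inl i) ^ a i)) * (t ^ mdeg b * (\<Prod>j\<in>UNIV. y (Inr j) ^ b j))"
          by (simp add: power_add algebra_simps)
        also have "\<dots> = c (a, b) * (\<Prod>i\<in>UNIV. (xx $ i) ^ a i) * (\<Prod>j\<in>UNIV. (uu $ j) ^ b j)"
          unfolding xx_def uu_def using pw[of "\<lambda>i. y (Inl i)" a] pw[of "\<lambda>j. y (Inr j)" b] by simp
        finally show "g (F p) * (\<Prod>k\<in>UNIV. y k ^ F p k)
            = (case p of (a, b) \<Rightarrow> c (a, b) * (\<Prod>i\<in>UNIV. (xx $ i) ^ a i) * (\<Prod>j\<in>UNIV. (uu $ j) ^ b j))"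
          using ab by simp
      qed
      finally have eq: "(\<Sum>\<alpha>\<in>F ` monomials_upto d. g \<alpha> * (\<Prod>k\<in>UNIV. y k ^ \<alpha> k)) = peval d c xx uu" .
      have "(xx, uu) \<in> cube t"
        unfolding cube_def xx_def uu_def using y t
        by (auto simp: abs_mult intro!: mult_left_le[of _ t, simplified])
      hence "(xx, uu) \<in> X \<times> U" using cube_sub[OF t] by auto
      thus "\<bar>\<Sum>\<alpha>\<in>F ` monomials_upto d. g \<alpha> * (\<Prod>k\<in>UNIV. y k ^ \<alpha> k)\<bar> \<le> M"
        unfolding eq using Mb by auto
    qed
    define k where "k = mdeg (fst p0) + mdeg (snd p0)"
    have "\<bar>g (F p0)\<bar> \<le> 3 ^ d * M"
      by (rule coeff_bound_real[OF finA degA realb]) (use p0 in auto)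
    moreover have "g (F p0) = c p0 * t ^ k"
      unfolding g_def sumF k_def by (simp add: F_def case_sum_o_inj)
    ultimately have h1: "\<bar>c p0\<bar> * t ^ k \<le> 3 ^ d * M" using t by (simp add: abs_mult)
    have "t ^ d \<le> t ^ k"
      using p0 t cr1 unfolding k_def by (intro power_decreasing) (auto simp: monomials_upto_def case_prod_beta)
    hence "\<bar>c p0\<bar> * t ^ d \<le> \<bar>c p0\<bar> * t ^ k" by (intro mult_left_mono) auto
    thus ?thesis using h1 by linarith
  qed
  have key2: "\<bar>c p0\<bar> * cr ^ d \<le> 3 ^ d * M" if p0: "p0 \<in> monomials_upto d" for p0
  proof (rule field_le_mult_one_interval)
    fix z :: real assume z: "0 < z" "z < 1"
    show "z * (\<bar>c p0\<bar> * cr ^ d) \<le> 3 ^ d * M"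
    proof (cases "d = 0")
      case True
      have "\<bar>c p0\<bar> * (cr/2) ^ d \<le> 3 ^ d * M" using key[OF p0, of "cr/2"] crpos by simp
      hence "\<bar>c p0\<bar> \<le> 3 ^ d * M" using True by simp
      moreover have "z * \<bar>c p0\<bar> \<le> \<bar>c p0\<bar>" using z by (intro mult_left_le_one_le) auto
      ultimately show ?thesis using True by simp
    next
      case False
      define w where "w = root d z"
      have w0: "0 < w" "w < 1" unfolding w_def using z False by auto
      have wz: "w ^ d = z" unfolding w_def using z False by simp
      have "\<bar>c p0\<bar> * (w * cr) ^ d \<le> 3 ^ d * M" using key[OF p0, of "w * cr"] crpos w0
        by (simp add: mult_less_cancel_right2)
      thus ?thesis using wz by (simp add: power_mult_distrib algebra_simps)
    qed
  qed
  show ?thesis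
    unfolding assms(7) cr_def[symmetric] M_def[symmetric]
    by (rule final_part[OF key2 crpos M0])
qed


end
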